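(* In the parallel-links routing game with homogeneous costs described in the context, let $\alpha^i>0$ ($i\in\mathcal N$) be weights with $\sum_i\alpha^i=1$, and consider the weighted social cost $J^{\alpha}_{sys}(\mathbf f)=\sum_i\alpha^i\sum_lf^i_lT_l(f_l)$. Let $PoS$ be the ratio of the weighted social cost of the NBS, $\sum_i\alpha^i\tilde g^i$, to the minimum of $J^\alpha_{sys}$ over feasible profiles, and let $\overline{PoS}=(\sum_i\tilde g^i)/J^*_{sys}$ be the Price of Selfishness for the unweighted social cost. Then $$\frac{\min_i\alpha^i}{\max_i\alpha^i}\,\overline{PoS}\ \le\ PoS\ \le\ \frac{\max_i\alpha^i}{\min_i\alpha^i}\,\overline{PoS}.$$
   Context: Parallel-links routing game: users $\mathcal N=\{1,\dots,N\}$ share parallel links $\mathcal L=\{1,\dots,L\}$ from a common source to a common destination; link $l$ has capacity $c_l$. User $i$ has demand $r^i>0$, $R=\sum_ir^i<\sum_lc_l$. A routing strategy of user $i$ is $\mathbf f^i=(f^i_l)_l$ with $f^i_l\ge0$, $\sum_lf^i_l=r^i$; feasible profiles form $\mathbf F$; $f_l=\sum_if^i_l$. Homogeneous costs: $J^i(\mathbf f)=\sum_lf^i_lT_l(f_l)$, each $T_l:[0,\infty)\to[0,\infty)$ strictly increasing, convex, continuously differentiable, with $T_l(f_l)=T(c_l-f_l)$ for $f_l<c_l$ and $T_l(f_l)=\infty$ for $f_l\ge c_l$, for a single link-independent function $T$ with $T(c_l-f_l)$ strictly increasing in $f_l$. NEP: the unique feasible $\hat{\mathbf f}$ in which each user's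 strategy minimizes its cost given the others'; $\hat J^i=J^i(\hat{\mathbf f})$. Unweighted social cost $J_{sys}=\sum_iJ^i=\sum_lf_lT_l(f_l)$, minimum $J^*_{sys}$. Bargaining: $\mathcal G$ is the set of all vectors $\sum_{m=1}^Mp_m(J^1(\mathbf f(m)),\dots,J^N(\mathbf f(m)))$ with $M$ finite, $p_m>0$, $\sum p_m=1$, $\mathbf f(m)\in\mathbf F$; the NBS is the unique $\tilde{\mathbf g}$ maximizing $\prod_i(\hat J^i-g^i)$ over $\mathbf g\in\mathcal G$ with $g^i\le\hat J^i$ for all $i$. *)

theory Defs
  imports "HOL-Analysis.Analysis"
begin

text \<open>Users are indexed by a finite type 'u, links by a finite type 'l.
  A profile is f :: 'u => 'l => real, where f i l is the flow of user i on link l.\<close>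

definition link_flow :: "('u::finite \<Rightarrow> 'l::finite \<Rightarrow> real) \<Rightarrow> 'l \<Rightarrow> real" where
  "link_flow f l = (\<Sum>i\<in>UNIV. f i l)"

text \<open>Feasible profiles of finite cost (all link flows below capacity).\<close>
definition feasible :: "('l::finite \<Rightarrow> real) \<Rightarrow> ('u::finite \<Rightarrow> real) \<Rightarrow> ('u \<Rightarrow> 'l \<Rightarrow> real) set" where
  "feasible c r = {f. (\<forall>i l. 0 \<le> f i l) \<and> (\<forall>i. (\<Sum>l\<in>UNIV. f i l) = r i)
                      \<and> (\<forall>l. link_flow f l < c l)}"

definition link_cost :: "(real \<Rightarrow> real) \<Rightarrow> ('l \<Rightarrow> real) \<Rightarrow> 'l \<Rightarrow> real \<Rightarrow> real" where
  "link_cost T c l x = T (c l - x)"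

definition user_cost :: "(real \<Rightarrow> real) \<Rightarrow> ('l::finite \<Rightarrow> real) \<Rightarrow> ('u::finite \<Rightarrow> 'l \<Rightarrow> real) \<Rightarrow> 'u \<Rightarrow> real" where
  "user_cost T c f i = (\<Sum>l\<in>UNIV. f i l * link_cost T c l (link_flow f l))"

definition sys_cost :: "(real \<Rightarrow> real) \<Rightarrow> ('l::finite \<Rightarrow> real) \<Rightarrow> ('u::finite \<Rightarrow> 'l \<Rightarrow> real) \<Rightarrow> real" where
  "sys_cost T c f = (\<Sum>i\<in>UNIV. user_cost T c f i)"

definition weighted_sys_cost :: "('u::finite \<Rightarrow> real) \<Rightarrow> (real \<Rightarrow> real) \<Rightarrow> ('l::finite \<Rightarrow> real) \<Rightarrow> ('u \<Rightarrow> 'l \<Rightarrow> real) \<Rightarrow> real" where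
  "weighted_sys_cost \<alpha> T c f = (\<Sum>i\<in>UNIV. \<alpha> i * user_cost T c f i)"

definition is_NEP :: "(real \<Rightarrow> real) \<Rightarrow> ('l::finite \<Rightarrow> real) \<Rightarrow> ('u::finite \<Rightarrow> real) \<Rightarrow> ('u \<Rightarrow> 'l \<Rightarrow> real) \<Rightarrow> bool" where
  "is_NEP T c r f \<longleftrightarrow> f \<in> feasible c r \<and>
     (\<forall>i g. g \<in> feasible c r \<longrightarrow> (\<forall>j. j \<noteq> i \<longrightarrow> g j = f j) \<longrightarrow> user_cost T c f i \<le> user_cost T c g i)"

definition bargain_set :: "(real \<Rightarrow> real) \<Rightarrow> ('l::finite \<Rightarrow> real) \<Rightarrow> ('u::finite \<Rightarrow> real) \<Rightarrow> ('u \<Rightarrow> real) set" where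
  "bargain_set T c r = {g. \<exists>(M::nat) p fs. 0 < M \<and> (\<forall>m<M. 0 < p m \<and> fs m \<in> feasible c r)
       \<and> (\<Sum>m<M. p m) = 1 \<and> g = (\<lambda>i. \<Sum>m<M. p m * user_cost T c (fs m) i)}"

definition is_NBS :: "(real \<Rightarrow> real) \<Rightarrow> ('l::finite \<Rightarrow> real) \<Rightarrow> ('u::finite \<Rightarrow> real) \<Rightarrow> ('u \<Rightarrow> real) \<Rightarrow> ('u \<Rightarrow> real) \<Rightarrow> bool" where
  "is_NBS T c r Jhat g \<longleftrightarrow> g \<in> bargain_set T c r \<and> (\<forall>i. g i \<le> Jhat i) \<and>
     (\<forall>h \<in> bargain_set T c r. (\<forall>i. h i \<le> Jhat i) \<longrightarrow>
        (\<Prod>i\<in>UNIV. Jhat i - h i) \<le> (\<Prod>i\<in>UNIV. Jhat i - g i))"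

end

theory Submission
  imports Defs
begin

theorem proposition3p2:
  fixes c :: "'l::finite \<Rightarrow> real" and r :: "'u::finite \<Rightarrow> real"
    and T :: "real \<Rightarrow> real" and \<alpha> :: "'u \<Rightarrow> real"
    and fhat :: "'u \<Rightarrow> 'l \<Rightarrow> real" and gt :: "'u \<Rightarrow> real"
  assumes r_pos: "\<forall>i. 0 < r i"
    and cap: "(\<Sum>i\<in>UNIV. r i) < (\<Sum>l\<in>UNIV. c l)"
    and T_nonneg: "\<forall>l. \<forall>x\<in>{0..<c l}. 0 \<le> T (c l - x)"
    and T_incr: "\<forall>l. strict_mono_on {0..<c l} (\<lambda>x. T (c l - x))"
    and T_convex: "\<forall>l. convex_on {0..<c l} (\<lambda>x. T (c l - x))"
    and T_C1: "\<forall>l. \<exists>T'. continuous_on {0..<c l} T' \<and>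
                 (\<forall>x\<in>{0..<c l}. ((\<lambda>y. T (c l - y)) has_real_derivative T' x) (at x within {0..<c l}))"
    and alpha_pos: "\<forall>i. 0 < \<alpha> i"
    and alpha_sum: "(\<Sum>i\<in>UNIV. \<alpha> i) = 1"
    and NEP: "is_NEP T c r fhat"
    and NBS: "is_NBS T c r (user_cost T c fhat) gt"
  defines "PoS \<equiv> (\<Sum>i\<in>UNIV. \<alpha> i * gt i) / (INF f\<in>feasible c r. weighted_sys_cost \<alpha> T c f)"
    and "PoS_bar \<equiv> (\<Sum>i\<in>UNIV. gt i) / (INF f\<in>feasible c r. sys_cost T c f)"
  shows "(Min (range \<alpha>) / Max (range \<alpha>)) * PoS_bar \<le> PoS
         \<and> PoS \<le> (Max (range \<alpha>) / Min (range \<alpha>)) * PoS_bar"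
proof -
  define m where "m = Min (range \<alpha>)"
  define M where "M = Max (range \<alpha>)"
  have fin: "finite (range \<alpha>)" by simp
  have mle: "\<And>i. m \<le> \<alpha> i" unfolding m_def using fin by simp
  have Mge: "\<And>i. \<alpha> i \<le> M" unfolding M_def using fin by simp
  have mpos: "0 < m" unfolding m_def using fin alpha_pos by (subst Min_gr_iff) auto
  have Mpos: "0 < M" using mpos mle Mge by (meson less_le_trans)
  have ucnn: "0 \<le> user_cost T c f i" if f: "f \<in> feasible c r" for f i
  proof -
    have "0 \<le> f i l * link_cost T c l (link_flow f l)" for l
    proof -
      have "0 \<le> link_flow f l" unfolding link_flow_def using f unfolding feasible_def
        by (auto intro: sum_nonneg)
      moreover have "link_flow f l < c l" using f unfolding feasible_def by auto
      ultimately have "0 \<le> T (c l - link_flow f l)" using T_nonneg by auto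
      then show ?thesis using f unfolding feasible_def link_cost_def by auto
    qed
    then show ?thesis unfolding user_cost_def by (auto intro: sum_nonneg)
  qed
  have fe: "fhat \<in> feasible c r" using NEP unfolding is_NEP_def by auto
  hence ne: "feasible c r \<noteq> {}" by auto
  have gtnn: "0 \<le> gt i" for i
  proof -
    have "gt \<in> bargain_set T c r" using NBS unfolding is_NBS_def by blast
    then obtain K :: nat and p fs where h1: "\<forall>m<K. 0 < p m \<and> fs m \<in> feasible c r"
      and h2: "gt = (\<lambda>i. \<Sum>m<K. p m * user_cost T c (fs m) i)"
      unfolding bargain_set_def by blast
    have "0 \<le> p k * user_cost T c (fs k) i" if "k < K" for k
      using h1 that ucnn by (simp add: less_imp_le)
    then show ?thesis unfolding h2 by (intro sum_nonneg) simp
  qed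
  define A where "A = (\<Sum>i\<in>UNIV. \<alpha> i * gt i)"
  define B where "B = (\<Sum>i\<in>UNIV. gt i)"
  define W where "W = (INF f\<in>feasible c r. weighted_sys_cost \<alpha> T c f)"
  define S where "S = (INF f\<in>feasible c r. sys_cost T c f)"
  have sysnn: "0 \<le> sys_cost T c f" if "f \<in> feasible c r" for f
    unfolding sys_cost_def using ucnn that by (auto intro: sum_nonneg)
  have sysw1: "m * sys_cost T c f \<le> weighted_sys_cost \<alpha> T c f" if "f \<in> feasible c r" for f
    unfolding sys_cost_def weighted_sys_cost_def sum_distrib_left
    using ucnn[OF that] mle by (auto intro!: sum_mono mult_right_mono)
  have sysw2: "weighted_sys_cost \<alpha> T c f \<le> M * sys_cost T c f" if "f \<in> feasible c r" for f
    unfolding sys_cost_def weighted_sys_cost_def sum_distrib_left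
    using ucnn[OF that] Mge by (auto intro!: sum_mono mult_right_mono)
  have bddS: "bdd_below (sys_cost T c ` feasible c r)"
    using sysnn by (auto intro!: bdd_belowI[where m=0])
  have bddW: "bdd_below (weighted_sys_cost \<alpha> T c ` feasible c r)"
    using sysnn sysw1 mpos by (auto intro!: bdd_belowI[where m=0]) (meson mult_nonneg_nonneg less_imp_le order_trans)
  have S0: "0 \<le> S" unfolding S_def using ne sysnn by (auto intro: cINF_greatest)
  have W1: "m * S \<le> W" unfolding W_def
  proof (rule cINF_greatest[OF ne])
    fix f assume f: "f \<in> feasible c r"
    have "S \<le> sys_cost T c f" unfolding S_def using bddS f by (rule cINF_lower2) simp
    hence "m * S \<le> m * sys_cost T c f" using mpos by simp
    then show "m * S \<le> weighted_sys_cost \<alpha> T c f" using sysw1[OF f] by linarith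
  qed
  have "W / M \<le> S" unfolding S_def
  proof (rule cINF_greatest[OF ne])
    fix f assume f: "f \<in> feasible c r"
    have "W \<le> weighted_sys_cost \<alpha> T c f" unfolding W_def using bddW f by (rule cINF_lower2) simp
    hence "W \<le> M * sys_cost T c f" using sysw2[OF f] by linarith
    then show "W / M \<le> sys_cost T c f" using Mpos by (simp add: divide_le_eq mult.commute)
  qed
  hence W2: "W \<le> M * S" using Mpos by (simp add: divide_le_eq mult.commute)
  have A1: "m * B \<le> A" unfolding A_def B_def sum_distrib_left
    using gtnn mle by (auto intro!: sum_mono mult_right_mono)
  have A2: "A \<le> M * B" unfolding A_def B_def sum_distrib_left
    using gtnn Mge by (auto intro!: sum_mono mult_right_mono)
  have B0: "0 \<le> B" unfolding B_def using gtnn by (auto intro: sum_nonneg)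
  have A0: "0 \<le> A" using A1 B0 mpos by (meson mult_nonneg_nonneg less_imp_le order_trans)
  have main: "(m / M) * (B / S) \<le> A / W \<and> A / W \<le> (M / m) * (B / S)"
  proof (cases "S = 0")
    case True
    hence "W = 0" using W1 W2 mpos by simp
    then show ?thesis using True by simp
  next
    case False
    hence Sp: "0 < S" using S0 by simp
    have Wp: "0 < W" using W1 mpos Sp by (meson mult_pos_pos less_le_trans)
    have "(m / M) * (B / S) = (m * B) / (M * S)" by simp
    also have "\<dots> \<le> A / (M * S)" using A1 Mpos Sp by (simp add: divide_right_mono)
    also have "\<dots> \<le> A / W" using W2 Wp A0
      by (intro divide_left_mono) (auto intro: order_trans)
    finally have 1: "(m / M) * (B / S) \<le> A / W" .
    have "A / W \<le> A / (m * S)" using W1 Wp A0 mpos Sp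
      by (intro divide_left_mono) (auto intro: order_trans)
    also have "\<dots> \<le> (M * B) / (m * S)" using A2 mpos Sp by (simp add: divide_right_mono)
    also have "\<dots> = (M / m) * (B / S)" by simp
    finally show ?thesis using 1 by simp
  qed
  show ?thesis using main unfolding PoS_def PoS_bar_def A_def B_def W_def S_def m_def M_def .
qed

end
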